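(* Assume (A1), (A2) and (A3), and let $\alpha>0$ be arbitrary. Along every trajectory of the algorithm described in the context, for all $k\ge0$, $$V_{\bar x}(k+1)-V_{\bar x}(k)\le-l\|\bm e_{\bar x}(k)\|^2+\beta_{\bar x\psi}\|\bm e_\psi(k)\|^2+\beta_{\bar x\xi}\|\bm e_\xi(k)\|^2+\alpha\max_ib_{1i}\big(\|\bm e_\psi(k)\|^2+\|\bm e_\xi(k)\|^2+N\|\bm e_{\bar x}(k)\|^2\big).$$
   Context: Game. $N$ coalitions; coalition $i$ has agents $i1,\dots,in_i$; $\mathcal V_i=\{i1,\dots,in_i\}$, $\mathcal V=\bigcup_i\mathcal V_i$, $n_{\mathrm{sum}}=\sum_in_i$; agents ordered lexicographically. Agent $ij$ has state $x_{ij}\in\mathbb{R}$; $\bm x_i=(x_{i1},\dots,x_{in_i})^T$, $\bm x=(\bm x_1^T,\dots,\bm x_N^T)^T$. Costs $f_{ij}:\mathbb{R}^{n_{\mathrm{sum}}}\to\mathbb{R}$, $f_i=\sum_jf_{ij}$. For $\bm y\in\mathbb{R}^N$, $g_i(\bm y)=f_i((y_1\mathbf 1_{n_1}^T,\dots,y_N\mathbf 1_{n_N}^T)^T)$, $\mathcal Q(\bm y)=(\partial g_i/\partial y_i(\bm y))_{i=1}^N$; $\bm y^*$ is the (unique) Nash equilibrium of the game $\min_{y_i}g_i(\bm y)$, $i=1,\dots,N$. Graph. Directed graph $\mathcal G=(\mathcal V,\mathcal E)$, $(pq,ij)\in\mathcal E$ meaning $ij$ receives from $pq$. $a_{ij}^{pq}=1$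 if $(pq,ij)\in\mathcal E$, $pq\ne ij$, else $0$; $d_{ij}=\sum_{pq}a_{ij}^{pq}$. $\mathcal G_i$: subgraph induced on $\mathcal V_i$. $\mathcal N_{ij}^{\mathrm{in}}$, $\mathcal N_{ij}^{i\text{-in}}$, $\mathcal N_{ij}^{i\text{-out}}$: in-neighbors in $\mathcal G$, in-neighbors and out-neighbors in $\mathcal G_i$. Assumptions. (A1) $\mathcal G$ and every $\mathcal G_i$ are strongly connected. (A2) each $f_{ij}$ is convex, $C^2$, with $\nabla f_{ij}$ Lipschitz of constant $l_{ij}$. (A3) $\exists l>0$: $(\bm a-\bm b)^T(\mathcal Q(\bm a)-\mathcal Q(\bm b))\ge l\|\bm a-\bm b\|^2$ for all $\bm a,\bm b\in\mathbb{R}^N$. Algorithm. Weights $r_{ij}^{im}>0$ for $im\in\mathcal N_{ij}^{i\text{-in}}\cup\{ij\}$ summing to 1, $c_{im}^{ij}>0$ for $im\in\mathcal N_{ij}^{i\text{-out}}\cup\{ij\}$ summing to 1, other within-coalition weights $0$; $R_i=[r_{ij}^{im}]$, $C_i=[c_{ij}^{im}]$ ($j$ row, $m$ column). Step size $\alpha>0$. Initialization: $x_{ij}(0),\bm\xi_{ij}(0)\in\mathbb{R}^{n_{\mathrm{sum}}}$ arbitrary, $\psi_{ij}^{il}(0)=\frac{\partial f_{ij}}{\partial x_{il}}(\bm\xi_{ij}(0))$. For $k\ge0$: $x_{ij}(k+1)=\sum_mr_{ij}^{im}x_{im}(k)-\frac{\alpha}{n_i}\sum_{m=1}^{n_i}\psi_{ij}^{im}(k)$;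 $\xi_{ij}^{pq}(k+1)=\xi_{ij}^{pq}(k)-\frac1{d_{ij}+a_{ij}^{pq}}\big(\sum_{lm\in\mathcal N_{ij}^{\mathrm{in}}}(\xi_{ij}^{pq}(k)-\xi_{lm}^{pq}(k))+a_{ij}^{pq}(\xi_{ij}^{pq}(k)-x_{pq}(k))\big)$ for all $pq\in\mathcal V$; $\psi_{ij}^{il}(k+1)=\sum_mc_{ij}^{im}\psi_{im}^{il}(k)+\frac{\partial f_{ij}}{\partial x_{il}}(\bm\xi_{ij}(k+1))-\frac{\partial f_{ij}}{\partial x_{il}}(\bm\xi_{ij}(k))$. Auxiliary quantities. $u_i$: $u_i^TR_i=u_i^T$, $u_i^T\mathbf 1_{n_i}=n_i$; $v_i$: $C_iv_i=v_i$, $\mathbf 1_{n_i}^Tv_i=n_i$. Constants: $\beta_{\bar x\psi}=\frac2l\max_i\frac{n_i^3\|u_i\|^2}{(u_i^Tv_i)^2}$, $\beta_{\bar x\xi}=\frac2l\max_i\{n_i\sum_{j=1}^{n_i}l_{ij}^2\}$, $b_{0i}=n_i+(\frac1{n_i}+\max_kn_k)\|v_i\|^2\sum_{j=1}^{n_i}l_{ij}^2$, $b_{1i}=\frac{\|u_i\|^2}{n_iu_i^Tv_i}b_{0i}$. Errors and Lyapunov function. $\bm\psi_i=(\psi_{i1}^{i1},\dots,\psi_{i1}^{in_i},\psi_{i2}^{i1},\dots,\psi_{in_i}^{in_i})^T$, $\bar{\bm\psi}_i=\frac1{n_i}(\mathbf 1_{n_i}^T\otimes I_{n_i})\bm\psi_i$,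 $\bm e_{\psi_i}=\bm\psi_i-v_i\otimes\bar{\bm\psi}_i$. $\bar x_i=u_i^T\bm x_i/n_i$, $e_{\bar x_i}=\bar x_i-y_i^*$, $\bar{\bm X}=(\bar x_1\mathbf 1_{n_1}^T,\dots,\bar x_N\mathbf 1_{n_N}^T)^T$. $\bm\xi_i=(\bm\xi_{i1}^T,\dots,\bm\xi_{in_i}^T)^T$, $\bm e_{\xi_i}=\bm\xi_i-\mathbf 1_{n_i}\otimes\bar{\bm X}$. $\bm e_\psi,\bm e_{\bar x},\bm e_\xi$: stacks over $i$. $V_{\bar x}(k)=\sum_{i=1}^N\frac{n_i^3}{\alpha u_i^Tv_i}e_{\bar x_i}(k)^2$. *)

theory Defs
  imports "HOL-Analysis.Analysis"
begin

definition pd :: "(real^'n \<Rightarrow> real) \<Rightarrow> 'n \<Rightarrow> real^'n \<Rightarrow> real" where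
  "pd f q p = frechet_derivative f (at p) (axis q 1)"

definition grad :: "(real^'n \<Rightarrow> real) \<Rightarrow> real^'n \<Rightarrow> real^'n" where
  "grad f p = (\<chi> q. pd f q p)"

definition C2 :: "(real^'n \<Rightarrow> real) \<Rightarrow> bool" where
  "C2 f \<longleftrightarrow> (\<forall>p. f differentiable at p) \<and> (\<forall>p. grad f differentiable at p) \<and>
     (\<forall>q r. continuous_on UNIV (\<lambda>p. frechet_derivative (grad f) (at p) (axis q 1) $ r))"

definition agents :: "('v \<Rightarrow> 'c) \<Rightarrow> 'c \<Rightarrow> 'v set" where
  "agents coal i = {v. coal v = i}"

definition nc :: "('v::finite \<Rightarrow> 'c) \<Rightarrow> 'c \<Rightarrow> nat" where
  "nc coal i = card (agents coal i)"

text \<open>Adjacency a_{ij}^{pq}: E contains (pq, ij) iff ij receives from pq.\<close>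
definition adj :: "('v \<times> 'v) set \<Rightarrow> 'v \<Rightarrow> 'v \<Rightarrow> real" where
  "adj E ij pq = (if (pq, ij) \<in> E \<and> pq \<noteq> ij then 1 else 0)"

definition indeg :: "('v::finite \<times> 'v) set \<Rightarrow> 'v \<Rightarrow> real" where
  "indeg E ij = (\<Sum>pq\<in>UNIV. adj E ij pq)"

definition in_nbrs :: "('v \<times> 'v) set \<Rightarrow> 'v \<Rightarrow> 'v set" where
  "in_nbrs E ij = {pq. (pq, ij) \<in> E \<and> pq \<noteq> ij}"

definition coal_in_nbrs :: "('v \<times> 'v) set \<Rightarrow> ('v \<Rightarrow> 'c) \<Rightarrow> 'v \<Rightarrow> 'v set" where
  "coal_in_nbrs E coal ij = {im. coal im = coal ij \<and> (im, ij) \<in> E \<and> im \<noteq> ij}"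

definition coal_out_nbrs :: "('v \<times> 'v) set \<Rightarrow> ('v \<Rightarrow> 'c) \<Rightarrow> 'v \<Rightarrow> 'v set" where
  "coal_out_nbrs E coal ij = {im. coal im = coal ij \<and> (ij, im) \<in> E \<and> im \<noteq> ij}"

definition strongly_connected_on :: "'v set \<Rightarrow> ('v \<times> 'v) set \<Rightarrow> bool" where
  "strongly_connected_on S E \<longleftrightarrow> (\<forall>u\<in>S. \<forall>w\<in>S. (u, w) \<in> (E \<inter> (S \<times> S))\<^sup>*)"

text \<open>Broadcast of y in R^N to the stacked vector (y_1 1^T, ..., y_N 1^T)^T.\<close>
definition bcast :: "('v \<Rightarrow> 'c) \<Rightarrow> real^'c \<Rightarrow> real^'v" where
  "bcast coal y = (\<chi> v. y $ coal v)"

definition gcost :: "('v::finite \<Rightarrow> 'c) \<Rightarrow> ('v \<Rightarrow> real^'v \<Rightarrow> real) \<Rightarrow> 'c \<Rightarrow> real^'c \<Rightarrow> real" where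
  "gcost coal f i y = (\<Sum>v\<in>agents coal i. f v (bcast coal y))"

definition Qmap :: "('v::finite \<Rightarrow> 'c) \<Rightarrow> ('v \<Rightarrow> real^'v \<Rightarrow> real) \<Rightarrow> real^'c \<Rightarrow> real^'c" where
  "Qmap coal f y = (\<chi> i. pd (gcost coal f i) i y)"

definition nash_eq :: "('v::finite \<Rightarrow> 'c) \<Rightarrow> ('v \<Rightarrow> real^'v \<Rightarrow> real) \<Rightarrow> real^'c \<Rightarrow> bool" where
  "nash_eq coal f ys \<longleftrightarrow> (\<forall>i t. gcost coal f i ys \<le> gcost coal f i (ys + (t - ys $ i) *\<^sub>R axis i 1))"

end

theory Submission
  imports Defs
begin


lemma fd_expand:
  fixes f :: "real^'n \<Rightarrow> real"
  assumes "f differentiable at p"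
  shows "frechet_derivative f (at p) h = (\<Sum>q\<in>UNIV. h$q * pd f q p)"
proof -
  have lin: "linear (frechet_derivative f (at p))" using linear_frechet_derivative[OF assms] .
  have "h = (\<Sum>q\<in>UNIV. h$q *\<^sub>R axis q 1)"
    using basis_expansion[of h] by (simp add: scalar_mult_eq_scaleR)
  then have "frechet_derivative f (at p) h = frechet_derivative f (at p) (\<Sum>q\<in>UNIV. h$q *\<^sub>R axis q 1)" by simp
  also have "\<dots> = (\<Sum>q\<in>UNIV. h$q * frechet_derivative f (at p) (axis q 1))"
    using lin by (simp add: linear_sum linear_scale)
  finally show ?thesis by (simp add: pd_def)
qed

lemma bcast_linear: "bounded_linear (bcast coal :: real^'c \<Rightarrow> real^'v)"
proof -
  have "linear (bcast coal :: real^'c \<Rightarrow> real^'v)"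
    by (rule linearI) (auto simp: bcast_def vec_eq_iff)
  then show ?thesis by (simp add: linear_conv_bounded_linear)
qed

lemma gcost_has_derivative:
  fixes coal :: "'v::finite \<Rightarrow> 'c::finite" and f :: "'v \<Rightarrow> real^'v \<Rightarrow> real"
  assumes diff: "\<forall>v p. f v differentiable at p"
  shows "(gcost coal f i has_derivative
     (\<lambda>h. \<Sum>j\<in>agents coal i. frechet_derivative (f j) (at (bcast coal y)) (bcast coal h))) (at y)"
proof -
  have "\<And>j. ((\<lambda>y. f j (bcast coal y)) has_derivative
      (\<lambda>h. frechet_derivative (f j) (at (bcast coal y)) (bcast coal h))) (at y)"
  proof -
    fix j
    have d1: "(bcast coal has_derivative bcast coal) (at y)"
      using bcast_linear bounded_linear_imp_has_derivative by blast
    have d2: "(f j has_derivative frechet_derivative (f j) (at (bcast coal y))) (at (bcast coal y))"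
      using diff frechet_derivative_works by blast
    show "?thesis j" using has_derivative_compose[OF d1 d2] by (simp add: o_def)
  qed
  then show ?thesis unfolding gcost_def[abs_def]
    by (intro has_derivative_sum) auto
qed

lemma bcast_axis: "bcast coal (axis i 1) = (\<Sum>m\<in>agents coal i. axis m (1::real))"
  by (auto simp: bcast_def vec_eq_iff axis_def agents_def sum_component
     sum.delta[where S="{v. coal v = i}", simplified] if_distrib cong: if_cong)

lemma Qmap_formula:
  fixes coal :: "'v::finite \<Rightarrow> 'c::finite" and f :: "'v \<Rightarrow> real^'v \<Rightarrow> real"
  assumes diff: "\<forall>v p. f v differentiable at p"
  shows "Qmap coal f y $ i = (\<Sum>j\<in>agents coal i. \<Sum>m\<in>agents coal i. pd (f j) m (bcast coal y))"
proof -
  have "Qmap coal f y $ i = (\<Sum>j\<in>agents coal i. frechet_derivative (f j) (at (bcast coal y)) (bcast coal (axis i 1)))"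
    by (simp add: Qmap_def pd_def flip: frechet_derivative_at[OF gcost_has_derivative[OF diff, of coal i y]])
  also have "\<dots> = (\<Sum>j\<in>agents coal i. \<Sum>m\<in>agents coal i. pd (f j) m (bcast coal y))"
  proof (rule sum.cong[OF refl])
    fix j
    have lin: "linear (frechet_derivative (f j) (at (bcast coal y)))"
      using linear_frechet_derivative diff by blast
    show "frechet_derivative (f j) (at (bcast coal y)) (bcast coal (axis i 1)) = (\<Sum>m\<in>agents coal i. pd (f j) m (bcast coal y))"
      unfolding bcast_axis using lin by (simp add: linear_sum pd_def)
  qed
  finally show ?thesis .
qed

lemma Qmap_NE_zero:
  fixes coal :: "'v::finite \<Rightarrow> 'c::finite" and f :: "'v \<Rightarrow> real^'v \<Rightarrow> real"
  assumes diff: "\<forall>v p. f v differentiable at p"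
    and NE: "nash_eq coal f ys"
  shows "Qmap coal f ys $ i = 0"
proof -
  let ?F = "\<lambda>h. \<Sum>j\<in>agents coal i. frechet_derivative (f j) (at (bcast coal ys)) (bcast coal h)"
  have gd: "(gcost coal f i has_derivative ?F) (at ys)" using gcost_has_derivative[OF diff] .
  have lin: "linear ?F" using gd has_derivative_linear by blast
  have ld: "((\<lambda>t::real. ys + t *\<^sub>R axis i 1) has_derivative (\<lambda>t. t *\<^sub>R axis i 1)) (at 0)"
    by (auto intro!: derivative_eq_intros)
  have cd: "((\<lambda>t::real. gcost coal f i (ys + t *\<^sub>R axis i 1)) has_derivative (\<lambda>t. ?F (t *\<^sub>R axis i 1))) (at 0)"
    using has_derivative_compose[OF ld, of "gcost coal f i" ?F] gd by (simp add: o_def)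
  have mn: "eventually (\<lambda>t. gcost coal f i (ys + 0 *\<^sub>R axis i 1) \<le> gcost coal f i (ys + t *\<^sub>R axis i 1)) (at (0::real))"
  proof (rule always_eventually, rule allI)
    fix t :: real
    show "gcost coal f i (ys + 0 *\<^sub>R axis i 1) \<le> gcost coal f i (ys + t *\<^sub>R axis i 1)"
      using NE unfolding nash_eq_def by (metis add_diff_cancel_right' scale_zero_left add.right_neutral)
  qed
  have "(\<lambda>t. ?F (t *\<^sub>R axis i 1)) = (\<lambda>h. 0)"
    using has_derivative_local_min[OF cd mn] .
  then have "?F (1 *\<^sub>R axis i 1) = 0" by metis
  then have "?F (axis i 1) = 0" by simp
  moreover have "Qmap coal f ys $ i = ?F (axis i 1)"
    by (simp add: Qmap_def pd_def flip: frechet_derivative_at[OF gd])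
  ultimately show ?thesis by simp
qed


lemma zero_propagate:
  fixes S :: "'v set" and A :: "'v \<Rightarrow> 'v \<Rightarrow> real" and p :: "'v \<Rightarrow> real"
  assumes fin: "finite S"
    and Ann: "\<forall>j\<in>S. \<forall>m\<in>S. A j m \<ge> 0"
    and pnn: "\<forall>j\<in>S. p j \<ge> 0"
    and pfix: "\<forall>m\<in>S. p m = (\<Sum>j\<in>S. p j * A j m)"
    and Rsub: "\<forall>m j. (m, j) \<in> R \<longrightarrow> m \<in> S \<and> j \<in> S \<and> A j m > 0"
    and path: "(a, b) \<in> R\<^sup>*" and a: "a \<in> S" and pa: "p a = 0"
  shows "p b = 0"
  using path
proof (induction rule: rtrancl_induct)
  case base
  then show ?case using pa .
next
  case (step y z)
  have yz: "y \<in> S" "z \<in> S" "A z y > 0" using Rsub step.hyps(2) by blast+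
  have "(\<Sum>j\<in>S. p j * A j y) = 0" using pfix yz step.IH by simp
  moreover have "\<forall>j\<in>S. p j * A j y \<ge> 0" using Ann pnn yz by (simp add: mult_nonneg_nonneg)
  ultimately have "\<forall>j\<in>S. p j * A j y = 0" using sum_nonneg_eq_0_iff[OF fin, of "\<lambda>j. p j * A j y"] by blast
  then have "p z * A z y = 0" using yz by blast
  then show ?case using yz by simp
qed
lemma perron_pos:
  fixes S :: "'v set" and A :: "'v \<Rightarrow> 'v \<Rightarrow> real" and u :: "'v \<Rightarrow> real"
  assumes fin: "finite S"
    and Ann: "\<forall>j\<in>S. \<forall>m\<in>S. A j m \<ge> 0"
    and Arow: "\<forall>j\<in>S. (\<Sum>m\<in>S. A j m) = 1"
    and ufix: "\<forall>m\<in>S. u m = (\<Sum>j\<in>S. u j * A j m)"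
    and usum: "(\<Sum>j\<in>S. u j) > 0"
    and Rsub: "\<forall>m j. (m, j) \<in> R \<longrightarrow> m \<in> S \<and> j \<in> S \<and> A j m > 0"
    and conn: "\<forall>a\<in>S. \<forall>b\<in>S. (a, b) \<in> R\<^sup>*"
  shows "\<forall>m\<in>S. u m > 0"
proof -
  define p where "p = (\<lambda>j. max (u j) 0)"
  define q where "q = (\<lambda>j. max (- u j) 0)"
  have pnn: "\<forall>j\<in>S. p j \<ge> 0" and qnn: "\<forall>j\<in>S. q j \<ge> 0" by (auto simp: p_def q_def)
  have upq: "\<And>j. u j = p j - q j" by (auto simp: p_def q_def)
  have ple: "\<forall>m\<in>S. p m \<le> (\<Sum>j\<in>S. p j * A j m)"
  proof
    fix m assume m: "m \<in> S"
    have "(\<Sum>j\<in>S. u j * A j m) \<le> (\<Sum>j\<in>S. p j * A j m)"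
      by (rule sum_mono) (use Ann m in \<open>simp add: p_def mult_right_mono\<close>)
    moreover have "0 \<le> (\<Sum>j\<in>S. p j * A j m)"
      by (rule sum_nonneg) (use Ann m pnn in \<open>simp add: mult_nonneg_nonneg\<close>)
    ultimately show "p m \<le> (\<Sum>j\<in>S. p j * A j m)" using ufix m by (auto simp: p_def)
  qed
  have "(\<Sum>m\<in>S. \<Sum>j\<in>S. p j * A j m) = (\<Sum>j\<in>S. \<Sum>m\<in>S. p j * A j m)" by (rule sum.swap)
  also have "\<dots> = (\<Sum>j\<in>S. p j)" using Arow by (simp add: sum_distrib_left[symmetric])
  finally have ssum: "(\<Sum>m\<in>S. (\<Sum>j\<in>S. p j * A j m) - p m) = 0" by (simp add: sum_subtractf)
  have nn: "\<And>m. m \<in> S \<Longrightarrow> 0 \<le> (\<Sum>j\<in>S. p j * A j m) - p m" using ple by simp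
  have "\<forall>m\<in>S. (\<Sum>j\<in>S. p j * A j m) - p m = 0"
    using sum_nonneg_eq_0_iff[OF fin, of "\<lambda>m. (\<Sum>j\<in>S. p j * A j m) - p m"] nn ssum by blast
  then have pfix: "\<forall>m\<in>S. p m = (\<Sum>j\<in>S. p j * A j m)" by auto
  have qfix: "\<forall>m\<in>S. q m = (\<Sum>j\<in>S. q j * A j m)"
  proof
    fix m assume m: "m \<in> S"
    have "q m = p m - u m" using upq[of m] by linarith
    also have "\<dots> = (\<Sum>j\<in>S. (p j - u j) * A j m)" using pfix ufix m by (simp add: sum_subtractf left_diff_distrib)
    also have "\<dots> = (\<Sum>j\<in>S. q j * A j m)" by (simp add: upq)
    finally show "q m = (\<Sum>j\<in>S. q j * A j m)" .
  qed
  show ?thesis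
  proof (cases "\<exists>a\<in>S. q a = 0")
    case True
    then obtain a where a: "a \<in> S" "q a = 0" by blast
    have q0: "\<forall>b\<in>S. q b = 0" using zero_propagate[OF fin Ann qnn qfix Rsub _ a(1) a(2)] conn a(1) by blast
    have up: "\<forall>b\<in>S. u b = p b" using q0 upq by simp
    have "\<forall>c\<in>S. p c \<noteq> 0"
    proof (intro ballI notI)
      fix c assume c: "c \<in> S" "p c = 0"
      have "\<forall>b\<in>S. p b = 0" using zero_propagate[OF fin Ann pnn pfix Rsub _ c(1) c(2)] conn c(1) by blast
      then have "(\<Sum>j\<in>S. u j) = 0" using up by simp
      then show False using usum by simp
    qed
    then show ?thesis using up pnn by (metis order_le_less)
  next
    case False
    then have "\<forall>a\<in>S. u a < 0" by (auto simp: q_def max_def split: if_splits)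
    then have "(\<Sum>j\<in>S. u j) \<le> 0" by (meson less_imp_le sum_nonpos)
    then show ?thesis using usum by simp
  qed
qed



lemma norm_sq_vec: "(norm (x::real^'n))^2 = (\<Sum>i\<in>UNIV. (x$i)^2)"
  unfolding power2_norm_eq_inner inner_vec_def by (simp add: power2_eq_square)

lemma sum_sq_bound:
  fixes d lc s :: "'a \<Rightarrow> real"
  assumes fin: "finite S" and b: "\<forall>j\<in>S. \<bar>d j\<bar> \<le> lc j * s j"
  shows "(\<Sum>j\<in>S. d j)^2 \<le> (\<Sum>j\<in>S. (lc j)^2) * (\<Sum>j\<in>S. (s j)^2)"
proof -
  have "\<bar>\<Sum>j\<in>S. d j\<bar> \<le> (\<Sum>j\<in>S. \<bar>d j\<bar>)" by (rule sum_abs)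
  also have "\<dots> \<le> (\<Sum>j\<in>S. lc j * s j)" by (rule sum_mono) (use b in blast)
  finally have "\<bar>\<Sum>j\<in>S. d j\<bar>^2 \<le> (\<Sum>j\<in>S. lc j * s j)^2"
    by (rule power_mono) simp
  also have "\<dots> \<le> (\<Sum>j\<in>S. (lc j)^2) * (\<Sum>j\<in>S. (s j)^2)" by (rule Cauchy_Schwarz_ineq_sum)
  finally show ?thesis by simp
qed

lemma partial_sum_grad:
  fixes g :: "real^'n \<Rightarrow> real^'n"
  assumes lip: "lipschitz_on L UNIV g"
  shows "\<bar>\<Sum>m\<in>S. g a $ m - g b $ m\<bar> \<le> L * (sqrt (real (card S)) * norm (a - b))"
proof -
  have L0: "L \<ge> 0" using lip by (simp add: lipschitz_on_def)
  have gl: "norm (g a - g b) \<le> L * norm (a - b)"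
    using lip by (simp add: lipschitz_on_def dist_norm)
  have "(\<Sum>m\<in>S. g a $ m - g b $ m)^2 \<le> (\<Sum>m\<in>S. (g a $ m - g b $ m)^2) * card S"
    by (rule sum_squared_le_sum_of_squares)
  also have "\<dots> \<le> (\<Sum>m\<in>UNIV. (g a $ m - g b $ m)^2) * card S"
    by (rule mult_right_mono) (auto intro: sum_mono2)
  also have "\<dots> = (norm (g a - g b))^2 * card S" by (simp add: norm_sq_vec)
  also have "\<dots> \<le> (L * norm (a - b))^2 * card S"
    by (rule mult_right_mono) (use gl in \<open>auto intro: power_mono\<close>)
  finally have sq: "(\<Sum>m\<in>S. g a $ m - g b $ m)^2 \<le> (L * (sqrt (real (card S)) * norm (a - b)))^2"
    by (simp add: power_mult_distrib mult_ac)
  show ?thesis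
    using power2_le_imp_le[of "\<bar>\<Sum>m\<in>S. g a $ m - g b $ m\<bar>"] sq L0 by simp
qed

lemma bcast_norm:
  fixes coal :: "'v::finite \<Rightarrow> 'c::finite"
  shows "(norm (bcast coal a - bcast coal b))^2 \<le> Max (range (\<lambda>i. real (nc coal i))) * (\<Sum>c\<in>UNIV. (a$c - b$c)^2)"
proof -
  have "(norm (bcast coal a - bcast coal b))^2 = (\<Sum>v\<in>UNIV. (a$coal v - b$coal v)^2)"
    by (simp add: norm_sq_vec bcast_def)
  also have "\<dots> = (\<Sum>c\<in>UNIV. \<Sum>v\<in>{x\<in>UNIV. coal x = c}. (a$coal v - b$coal v)^2)"
    by (rule sum.group[symmetric]) auto
  also have "\<dots> = (\<Sum>c\<in>UNIV. real (nc coal c) * (a$c - b$c)^2)"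
    by (rule sum.cong[OF refl]) (simp add: nc_def agents_def)
  also have "\<dots> \<le> (\<Sum>c\<in>UNIV. Max (range (\<lambda>i. real (nc coal i))) * (a$c - b$c)^2)"
    by (rule sum_mono, rule mult_right_mono) auto
  finally show ?thesis by (simp add: sum_distrib_left)
qed

lemma triple_ineq:
  fixes x y z p q r :: real
  assumes "p > 0" "q > 0" "r > 0"
  shows "(x+y+z)^2 \<le> (p+q+r)*(x^2/p + y^2/q + z^2/r)"
proof -
  have h: "2*a*b \<le> t*a^2/s + s*b^2/t" if "s > 0" "t > 0" for a b s t :: real
  proof -
    have "0 \<le> (t*a - s*b)^2 / (s*t)" using that by simp
    also have "\<dots> = t*a^2/s + s*b^2/t - 2*a*b" using that
      by (simp add: field_simps power2_eq_square)
    finally show ?thesis by simp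
  qed
  have "(p+q+r)*(x^2/p + y^2/q + z^2/r) = x^2 + y^2 + z^2 + (q*x^2/p + p*y^2/q) + (r*x^2/p + p*z^2/r) + (r*y^2/q + q*z^2/r)"
    using assms by (simp add: field_simps)
  moreover have "(x+y+z)^2 = x^2+y^2+z^2 + 2*x*y + 2*x*z + 2*y*z" by (simp add: power2_eq_square algebra_simps)
  ultimately show ?thesis using h[of p q x y] h[of p r x z] h[of q r y z] assms by linarith
qed

lemma step_ineq:
  fixes n uw \<alpha> l e P G Q :: real
  assumes n: "n > 0" and uw: "uw > 0" and a: "\<alpha> > 0" and l: "l > 0"
  shows "n^3/(\<alpha>*uw) * (e - \<alpha>/n^2 * (P + uw*G/n))^2 - n^3/(\<alpha>*uw) * e^2
     \<le> -2*e*Q + l*e^2 + 2/l*(G-Q)^2 + 2/l*((n/uw)^2*P^2) + \<alpha>/(n^3*uw)*(uw*G + n*P)^2"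
proof -
  have eq: "n^3/(\<alpha>*uw) * (e - \<alpha>/n^2 * (P + uw*G/n))^2 - n^3/(\<alpha>*uw) * e^2
     = -2*e*(G-Q) - 2*e*((n/uw)*P) - 2*e*Q + \<alpha>/(n^3*uw)*(uw*G + n*P)^2"
    using n uw a by (simp add: field_simps power2_eq_square power3_eq_cube)
  have h: "-2*e*D \<le> l/2*e^2 + 2/l*D^2" for D
  proof -
    have "0 \<le> l/2 * (e + 2/l*D)^2" using l by simp
    also have "\<dots> = l/2*e^2 + 2/l*D^2 + 2*e*D" using l by (simp add: field_simps power2_eq_square)
    finally show ?thesis by simp
  qed
  have "(n/uw)^2*P^2 = ((n/uw)*P)^2" by (simp add: field_simps power2_eq_square)
  then show ?thesis using eq h[of "G-Q"] h[of "(n/uw)*P"] by simp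
qed

lemma z_bound:
  fixes w Ep :: "'a \<Rightarrow> real" and n M L2 Q D A B C :: real
  assumes fin: "finite S"
    and wn: "(\<Sum>j\<in>S. (w j)^2) > 0" and n: "n > 0" and M: "M > 0" and L2: "L2 \<ge> 0"
    and hQ: "Q^2 \<le> n^2 * L2 * M * C" and hD: "D^2 \<le> n * L2 * B"
    and hE: "(\<Sum>j\<in>S. (Ep j)^2) \<le> n * A"
    and A: "A \<ge> 0" and B: "B \<ge> 0" and C: "C \<ge> 0"
  shows "(\<Sum>j\<in>S. (w j * (Q + D) + n * Ep j)^2)
     \<le> n^2 * (n + (1/n + M) * (\<Sum>j\<in>S. (w j)^2) * L2) * (A + B + C)"
proof (cases "L2 = 0")
  case True
  then have "Q^2 \<le> 0" "D^2 \<le> 0" using hQ hD by auto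
  then have "Q = 0" "D = 0" by auto
  then have "(\<Sum>j\<in>S. (w j * (Q + D) + n * Ep j)^2) = n^2 * (\<Sum>j\<in>S. (Ep j)^2)"
    by (simp add: power_mult_distrib sum_distrib_left)
  also have "\<dots> \<le> n^2 * (n * A)" using hE n by (simp add: mult_left_mono)
  also have "\<dots> \<le> n^2 * (n * (A + B + C))" using n B C by (simp add: mult_left_mono)
  finally show ?thesis using True by (simp add: mult_ac)
next
  case False
  define W where "W = (\<Sum>j\<in>S. (w j)^2)"
  have L2p: "L2 > 0" using False L2 by simp
  define p where "p = n^2 * W * L2 * M"
  define q where "q = n * W * L2"
  define r where "r = n^3"
  have pos: "p > 0" "q > 0" "r > 0" using wn n M L2p by (simp_all add: p_def q_def r_def W_def)
  have "(\<Sum>j\<in>S. (w j * (Q + D) + n * Ep j)^2)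
     \<le> (\<Sum>j\<in>S. (p+q+r) * ((w j * Q)^2/p + (w j * D)^2/q + (n * Ep j)^2/r))"
    by (rule sum_mono) (use triple_ineq[OF pos] in \<open>simp add: distrib_left\<close>)
  also have "\<dots> = (p+q+r) * (W * Q^2/p + W * D^2/q + n^2 * (\<Sum>j\<in>S. (Ep j)^2)/r)"
  proof -
    have e1: "(\<Sum>j\<in>S. (w j * Q)^2/p) = W * Q^2/p"
      by (simp add: W_def sum_divide_distrib[symmetric] sum_distrib_right power_mult_distrib)
    have e2: "(\<Sum>j\<in>S. (w j * D)^2/q) = W * D^2/q"
      by (simp add: W_def sum_divide_distrib[symmetric] sum_distrib_right power_mult_distrib)
    have e3: "(\<Sum>j\<in>S. (n * Ep j)^2/r) = n^2 * (\<Sum>j\<in>S. (Ep j)^2)/r"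
      by (simp add: sum_divide_distrib[symmetric] sum_distrib_left power_mult_distrib)
    show ?thesis
      by (simp only: sum_distrib_left[symmetric] sum.distrib e1 e2 e3)
  qed
  also have "\<dots> \<le> (p+q+r) * (C + B + A)"
  proof (rule mult_left_mono)
    have "W * Q^2/p \<le> C"
    proof -
      have "W * Q^2 \<le> W * (n^2 * L2 * M * C)" using hQ wn by (simp add: W_def mult_left_mono)
      then have "W * Q^2 \<le> C * p" by (simp add: p_def mult_ac)
      then show ?thesis using pos(1) by (simp add: pos_divide_le_eq)
    qed
    moreover have "W * D^2/q \<le> B"
    proof -
      have "W * D^2 \<le> W * (n * L2 * B)" using hD wn by (simp add: W_def mult_left_mono)
      then have "W * D^2 \<le> B * q" by (simp add: q_def mult_ac)
      then show ?thesis using pos(2) by (simp add: pos_divide_le_eq)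
    qed
    moreover have "n^2 * (\<Sum>j\<in>S. (Ep j)^2)/r \<le> A"
    proof -
      have "n^2 * (\<Sum>j\<in>S. (Ep j)^2) \<le> n^2 * (n * A)" using hE n by (simp add: mult_left_mono)
      then have "n^2 * (\<Sum>j\<in>S. (Ep j)^2) \<le> A * r" by (simp add: r_def power3_eq_cube power2_eq_square mult_ac)
      then show ?thesis using pos(3) by (simp add: pos_divide_le_eq)
    qed
    ultimately show "W * Q^2/p + W * D^2/q + n^2 * (\<Sum>j\<in>S. (Ep j)^2)/r \<le> C + B + A" by linarith
    show "0 \<le> p + q + r" using pos by simp
  qed
  also have "(p+q+r) = n^2 * (n + (1/n + M) * W * L2)"
    using n by (simp add: p_def q_def r_def field_simps power2_eq_square power3_eq_cube)
  finally show ?thesis by (simp add: W_def add_ac)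
qed



theorem lemma2:
  fixes coal :: "'v::finite \<Rightarrow> 'c::finite"
    and E :: "('v \<times> 'v) set"
    and f :: "'v \<Rightarrow> real^'v \<Rightarrow> real"
    and lc :: "'v \<Rightarrow> real"
    and l \<alpha> :: real
    and r cw :: "'v \<Rightarrow> 'v \<Rightarrow> real"
    and x :: "nat \<Rightarrow> real^'v"
    and \<xi> :: "nat \<Rightarrow> 'v \<Rightarrow> real^'v"
    and \<psi> :: "nat \<Rightarrow> 'v \<Rightarrow> 'v \<Rightarrow> real"
    and u w :: "'v \<Rightarrow> real"
    and ys :: "real^'c"
    and k :: nat
  assumes coal_nonempty: "\<forall>i. agents coal i \<noteq> {}"
    \<comment> \<open>(A1)\<close>
    and A1_G: "strongly_connected_on UNIV E"
    and A1_Gi: "\<forall>i. strongly_connected_on (agents coal i) E"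
    \<comment> \<open>(A2)\<close>
    and A2_convex: "\<forall>v. convex_on UNIV (f v)"
    and A2_C2: "\<forall>v. C2 (f v)"
    and A2_lip: "\<forall>v. lipschitz_on (lc v) UNIV (grad (f v))"
    \<comment> \<open>(A3)\<close>
    and l_pos: "l > 0"
    and A3: "\<forall>a b. (a - b) \<bullet> (Qmap coal f a - Qmap coal f b) \<ge> l * (norm (a - b))\<^sup>2"
    \<comment> \<open>Nash equilibrium\<close>
    and NE: "nash_eq coal f ys"
    \<comment> \<open>weights: R_i row stochastic on in-neighbours in G_i, C_i column stochastic on out-neighbours\<close>
    and r_pos: "\<forall>ij im. coal im = coal ij \<longrightarrow> im \<in> coal_in_nbrs E coal ij \<union> {ij} \<longrightarrow> r ij im > 0"
    and r_zero: "\<forall>ij im. coal im = coal ij \<longrightarrow> im \<notin> coal_in_nbrs E coal ij \<union> {ij} \<longrightarrow> r ij im = 0"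
    and r_sum: "\<forall>ij. (\<Sum>im\<in>agents coal (coal ij). r ij im) = 1"
    and c_pos: "\<forall>ij im. coal im = coal ij \<longrightarrow> im \<in> coal_out_nbrs E coal ij \<union> {ij} \<longrightarrow> cw im ij > 0"
    and c_zero: "\<forall>ij im. coal im = coal ij \<longrightarrow> im \<notin> coal_out_nbrs E coal ij \<union> {ij} \<longrightarrow> cw im ij = 0"
    and c_sum: "\<forall>ij. (\<Sum>im\<in>agents coal (coal ij). cw im ij) = 1"
    and alpha_pos: "\<alpha> > 0"
    \<comment> \<open>initialisation (x 0 and \<xi> 0 arbitrary)\<close>
    and init_psi: "\<forall>ij il. coal il = coal ij \<longrightarrow> \<psi> 0 ij il = pd (f ij) il (\<xi> 0 ij)"
    \<comment> \<open>updates\<close>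
    and upd_x: "\<forall>k ij. x (Suc k) $ ij =
        (\<Sum>im\<in>agents coal (coal ij). r ij im * x k $ im)
        - \<alpha> / real (nc coal (coal ij)) * (\<Sum>im\<in>agents coal (coal ij). \<psi> k ij im)"
    and upd_xi: "\<forall>k ij pq. \<xi> (Suc k) ij $ pq = \<xi> k ij $ pq
        - 1 / (indeg E ij + adj E ij pq) *
          ((\<Sum>lm\<in>in_nbrs E ij. \<xi> k ij $ pq - \<xi> k lm $ pq)
           + adj E ij pq * (\<xi> k ij $ pq - x k $ pq))"
    and upd_psi: "\<forall>k ij il. coal il = coal ij \<longrightarrow> \<psi> (Suc k) ij il =
        (\<Sum>im\<in>agents coal (coal ij). cw ij im * \<psi> k im il)
        + pd (f ij) il (\<xi> (Suc k) ij) - pd (f ij) il (\<xi> k ij)"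
    \<comment> \<open>left Perron vector u_i of R_i and right Perron vector v_i (here w) of C_i\<close>
    and u_left: "\<forall>im. (\<Sum>ij\<in>agents coal (coal im). u ij * r ij im) = u im"
    and u_norm: "\<forall>i. (\<Sum>ij\<in>agents coal i. u ij) = real (nc coal i)"
    and w_right: "\<forall>ij. (\<Sum>im\<in>agents coal (coal ij). cw ij im * w im) = w ij"
    and w_norm: "\<forall>i. (\<Sum>ij\<in>agents coal i. w ij) = real (nc coal i)"
  shows "let
      n = \<lambda>i. real (nc coal i);
      unorm2 = \<lambda>i. (\<Sum>j\<in>agents coal i. (u j)\<^sup>2);
      wnorm2 = \<lambda>i. (\<Sum>j\<in>agents coal i. (w j)\<^sup>2);
      uw = \<lambda>i. (\<Sum>j\<in>agents coal i. u j * w j);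
      L2 = \<lambda>i. (\<Sum>j\<in>agents coal i. (lc j)\<^sup>2);
      beta_xpsi = 2 / l * Max (range (\<lambda>i. n i ^ 3 * unorm2 i / (uw i)\<^sup>2));
      beta_xxi = 2 / l * Max (range (\<lambda>i. n i * L2 i));
      b0 = \<lambda>i. n i + (1 / n i + Max (range n)) * wnorm2 i * L2 i;
      b1 = \<lambda>i. unorm2 i / (n i * uw i) * b0 i;
      xbar = \<lambda>k i. (\<Sum>j\<in>agents coal i. u j * x k $ j) / n i;
      Xbar = \<lambda>k. (\<chi> v. xbar k (coal v)) :: real^'v;
      psibar = \<lambda>k i il. (\<Sum>j\<in>agents coal i. \<psi> k j il) / n i;
      Epsi = \<lambda>k. (\<Sum>i\<in>UNIV. \<Sum>j\<in>agents coal i. \<Sum>il\<in>agents coal i.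
                      (\<psi> k j il - w j * psibar k i il)\<^sup>2);
      Exbar = \<lambda>k. (\<Sum>i\<in>UNIV. (xbar k i - ys $ i)\<^sup>2);
      Exi = \<lambda>k. (\<Sum>j\<in>UNIV. (norm (\<xi> k j - Xbar k))\<^sup>2);
      Vx = \<lambda>k. (\<Sum>i\<in>UNIV. n i ^ 3 / (\<alpha> * uw i) * (xbar k i - ys $ i)\<^sup>2)
    in Vx (Suc k) - Vx k \<le> - l * Exbar k + beta_xpsi * Epsi k + beta_xxi * Exi k
           + \<alpha> * Max (range b1) * (Epsi k + Exi k + real CARD('c) * Exbar k)"
proof -
  define n where "n = (\<lambda>i. real (nc coal i))"
  define unorm2 where "unorm2 = (\<lambda>i. (\<Sum>j\<in>agents coal i. (u j)\<^sup>2))"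
  define wnorm2 where "wnorm2 = (\<lambda>i. (\<Sum>j\<in>agents coal i. (w j)\<^sup>2))"
  define uw where "uw = (\<lambda>i. (\<Sum>j\<in>agents coal i. u j * w j))"
  define L2 where "L2 = (\<lambda>i. (\<Sum>j\<in>agents coal i. (lc j)\<^sup>2))"
  define beta_xpsi where "beta_xpsi = 2 / l * Max (range (\<lambda>i. n i ^ 3 * unorm2 i / (uw i)\<^sup>2))"
  define beta_xxi where "beta_xxi = 2 / l * Max (range (\<lambda>i. n i * L2 i))"
  define b0 where "b0 = (\<lambda>i. n i + (1 / n i + Max (range n)) * wnorm2 i * L2 i)"
  define b1 where "b1 = (\<lambda>i. unorm2 i / (n i * uw i) * b0 i)"
  define xbar where "xbar = (\<lambda>k i. (\<Sum>j\<in>agents coal i. u j * x k $ j) / n i)"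
  define Xbar where "Xbar = (\<lambda>k. (\<chi> v. xbar k (coal v)) :: real^'v)"
  define psibar where "psibar = (\<lambda>k i il. (\<Sum>j\<in>agents coal i. \<psi> k j il) / n i)"
  define Epsi where "Epsi = (\<lambda>k. (\<Sum>i\<in>UNIV. \<Sum>j\<in>agents coal i. \<Sum>il\<in>agents coal i.
                      (\<psi> k j il - w j * psibar k i il)\<^sup>2))"
  define Exbar where "Exbar = (\<lambda>k. (\<Sum>i\<in>UNIV. (xbar k i - ys $ i)\<^sup>2))"
  define Exi where "Exi = (\<lambda>k. (\<Sum>j\<in>UNIV. (norm (\<xi> k j - Xbar k))\<^sup>2))"
  define Vx where "Vx = (\<lambda>k. (\<Sum>i\<in>UNIV. n i ^ 3 / (\<alpha> * uw i) * (xbar k i - ys $ i)\<^sup>2))"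
  have main: "Vx (Suc k) - Vx k \<le> - l * Exbar k + beta_xpsi * Epsi k + beta_xxi * Exi k
           + \<alpha> * Max (range b1) * (Epsi k + Exi k + real CARD('c) * Exbar k)"
  proof -
    have finS: "\<And>i. finite (agents coal i)" by simp
    have card_pos: "\<And>i. card (agents coal i) > 0" using coal_nonempty by (simp add: card_gt_0_iff)
    have npos: "\<And>i. n i > 0" using card_pos by (simp add: n_def nc_def)
    have ncard: "\<And>i. n i = real (card (agents coal i))" by (simp add: n_def nc_def)
    have diff: "\<forall>v p. f v differentiable at p" using A2_C2 by (simp add: C2_def)
    have lc0: "\<And>v. lc v \<ge> 0" using A2_lip by (simp add: lipschitz_on_def)
    have inS: "\<And>i j. j \<in> agents coal i \<longleftrightarrow> coal j = i" by (simp add: agents_def)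
    have agS: "\<And>j. agents coal (coal j) = {v. coal v = coal j}" by (simp add: agents_def)
    have upos: "u m > 0" if m: "m \<in> agents coal i" for i m
    proof -
      define S where "S = agents coal i"
      define R where "R = {(a, b). (a, b) \<in> E \<and> a \<in> S \<and> b \<in> S \<and> a \<noteq> b}"
      have "\<forall>m\<in>S. u m > 0"
      proof (rule perron_pos[where A = r and R = R])
        show "finite S" by (simp add: S_def)
        show "\<forall>j\<in>S. \<forall>m\<in>S. 0 \<le> r j m"
        proof (intro ballI)
          fix j m assume jm: "j \<in> S" "m \<in> S"
          then have c: "coal m = coal j" by (simp add: S_def agents_def)
          show "0 \<le> r j m"
          proof (cases "m \<in> coal_in_nbrs E coal j \<union> {j}")
            case True then show ?thesis using r_pos[rule_format, OF c True] by simp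
          next
            case False then show ?thesis using r_zero[rule_format, OF c False] by simp
          qed
        qed
        show "\<forall>j\<in>S. (\<Sum>m\<in>S. r j m) = 1"
        proof
          fix j assume "j \<in> S"
          then have "agents coal (coal j) = S" by (simp add: S_def agents_def)
          then show "(\<Sum>m\<in>S. r j m) = 1" using r_sum[rule_format, of j] by simp
        qed
        show "\<forall>m\<in>S. u m = (\<Sum>j\<in>S. u j * r j m)"
        proof
          fix m assume "m \<in> S"
          then have "agents coal (coal m) = S" by (simp add: S_def agents_def)
          then show "u m = (\<Sum>j\<in>S. u j * r j m)" using u_left[rule_format, of m] by simp
        qed
        show "0 < sum u S" using u_norm npos by (simp add: S_def n_def)
        show "\<forall>m j. (m, j) \<in> R \<longrightarrow> m \<in> S \<and> j \<in> S \<and> 0 < r j m"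
        proof (intro allI impI)
          fix m j assume mj: "(m, j) \<in> R"
          then have c: "coal m = coal j" and mS: "m \<in> S" and jS: "j \<in> S" by (auto simp: R_def S_def agents_def)
          have "m \<in> coal_in_nbrs E coal j" using mj c by (auto simp: R_def coal_in_nbrs_def)
          then show "m \<in> S \<and> j \<in> S \<and> 0 < r j m" using r_pos[rule_format, OF c] mS jS by blast
        qed
        show "\<forall>a\<in>S. \<forall>b\<in>S. (a, b) \<in> R\<^sup>*"
        proof (intro ballI)
          fix a b assume ab: "a \<in> S" "b \<in> S"
          have "(a, b) \<in> (E \<inter> S \<times> S)\<^sup>*" using A1_Gi ab by (simp add: strongly_connected_on_def S_def)
          moreover have "E \<inter> S \<times> S \<subseteq> R\<^sup>=" by (auto simp: R_def)
          ultimately have "(a, b) \<in> (R\<^sup>=)\<^sup>*" using rtrancl_mono by blast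
          then show "(a, b) \<in> R\<^sup>*" by simp
        qed
      qed
      then show ?thesis using m by (simp add: S_def)
    qed
    have wpos: "w m > 0" if m: "m \<in> agents coal i" for i m
    proof -
      define S where "S = agents coal i"
      define R where "R = {(a, b). (b, a) \<in> E \<and> a \<in> S \<and> b \<in> S \<and> a \<noteq> b}"
      have "\<forall>m\<in>S. w m > 0"
      proof (rule perron_pos[where A = "\<lambda>j m. cw m j" and R = R])
        show "finite S" by (simp add: S_def)
        show "\<forall>j\<in>S. \<forall>m\<in>S. 0 \<le> cw m j"
        proof (intro ballI)
          fix j m assume jm: "j \<in> S" "m \<in> S"
          then have c: "coal m = coal j" by (simp add: S_def agents_def)
          show "0 \<le> cw m j"
          proof (cases "m \<in> coal_out_nbrs E coal j \<union> {j}")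
            case True then show ?thesis using c_pos[rule_format, OF c True] by simp
          next
            case False then show ?thesis using c_zero[rule_format, OF c False] by simp
          qed
        qed
        show "\<forall>j\<in>S. (\<Sum>m\<in>S. cw m j) = 1"
        proof
          fix j assume "j \<in> S"
          then have "agents coal (coal j) = S" by (simp add: S_def agents_def)
          then show "(\<Sum>m\<in>S. cw m j) = 1" using c_sum[rule_format, of j] by simp
        qed
        show "\<forall>m\<in>S. w m = (\<Sum>j\<in>S. w j * cw m j)"
        proof
          fix m assume "m \<in> S"
          then have "agents coal (coal m) = S" by (simp add: S_def agents_def)
          then show "w m = (\<Sum>j\<in>S. w j * cw m j)" using w_right[rule_format, of m] by (simp add: mult.commute)
        qed
        show "0 < sum w S" using w_norm npos by (simp add: S_def n_def)
        show "\<forall>m j. (m, j) \<in> R \<longrightarrow> m \<in> S \<and> j \<in> S \<and> 0 < cw m j"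
        proof (intro allI impI)
          fix m j assume mj: "(m, j) \<in> R"
          then have c: "coal m = coal j" and mS: "m \<in> S" and jS: "j \<in> S" by (auto simp: R_def S_def agents_def)
          have "m \<in> coal_out_nbrs E coal j" using mj c by (auto simp: R_def coal_out_nbrs_def)
          then show "m \<in> S \<and> j \<in> S \<and> 0 < cw m j" using c_pos[rule_format, OF c] mS jS by blast
        qed
        show "\<forall>a\<in>S. \<forall>b\<in>S. (a, b) \<in> R\<^sup>*"
        proof (intro ballI)
          fix a b assume ab: "a \<in> S" "b \<in> S"
          have "(b, a) \<in> (E \<inter> S \<times> S)\<^sup>*" using A1_Gi ab by (simp add: strongly_connected_on_def S_def)
          then have "(a, b) \<in> ((E \<inter> S \<times> S)\<inverse>)\<^sup>*" by (simp add: rtrancl_converse)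
          moreover have "(E \<inter> S \<times> S)\<inverse> \<subseteq> R\<^sup>=" by (auto simp: R_def)
          ultimately have "(a, b) \<in> (R\<^sup>=)\<^sup>*" using rtrancl_mono by blast
          then show "(a, b) \<in> R\<^sup>*" by simp
        qed
      qed
      then show ?thesis using m by (simp add: S_def)
    qed
    have uwpos: "\<And>i. uw i > 0"
      unfolding uw_def using coal_nonempty upos wpos by (intro sum_pos) auto
    have wn_pos: "\<And>i. wnorm2 i > 0"
      unfolding wnorm2_def using coal_nonempty wpos by (intro sum_pos) (auto, metis less_irrefl)
    have un_nn: "\<And>i. unorm2 i \<ge> 0" unfolding unorm2_def by (simp add: sum_nonneg)
    have L2_nn: "\<And>i. L2 i \<ge> 0" unfolding L2_def by (simp add: sum_nonneg)
    define M where "M = Max (range n)"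
    have n_le_M: "\<And>i. n i \<le> M" unfolding M_def by (rule Max_ge) auto
    have Mpos: "M > 0" using n_le_M[of undefined] npos[of undefined] by linarith
    have Max_ge': "\<And>(g :: 'c \<Rightarrow> real) i. g i \<le> Max (range g)" by (rule Max_ge) auto
    have psisum: "(\<Sum>j\<in>agents coal i. \<psi> kk j m) = (\<Sum>j\<in>agents coal i. pd (f j) m (\<xi> kk j))"
      if m: "m \<in> agents coal i" for kk i m
    proof (induction kk)
      case 0
      show ?case
      proof (rule sum.cong[OF refl])
        fix j assume "j \<in> agents coal i"
        then have "coal m = coal j" using m by (simp add: agents_def)
        then show "\<psi> 0 j m = pd (f j) m (\<xi> 0 j)" using init_psi by simp
      qed
    next
      case (Suc kk)
      have "(\<Sum>j\<in>agents coal i. \<psi> (Suc kk) j m) = (\<Sum>j\<in>agents coal i.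
          (\<Sum>im\<in>agents coal i. cw j im * \<psi> kk im m) + pd (f j) m (\<xi> (Suc kk) j) - pd (f j) m (\<xi> kk j))"
      proof (rule sum.cong[OF refl])
        fix j assume j: "j \<in> agents coal i"
        then have c: "coal m = coal j" using m by (simp add: agents_def)
        have ag: "agents coal (coal j) = agents coal i" using j by (simp add: agents_def)
        show "\<psi> (Suc kk) j m = (\<Sum>im\<in>agents coal i. cw j im * \<psi> kk im m) + pd (f j) m (\<xi> (Suc kk) j) - pd (f j) m (\<xi> kk j)"
          using upd_psi[rule_format, OF c] ag by simp
      qed
      also have "\<dots> = (\<Sum>j\<in>agents coal i. \<Sum>im\<in>agents coal i. cw j im * \<psi> kk im m)
          + (\<Sum>j\<in>agents coal i. pd (f j) m (\<xi> (Suc kk) j)) - (\<Sum>j\<in>agents coal i. pd (f j) m (\<xi> kk j))"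
        by (simp add: sum.distrib sum_subtractf)
      also have "(\<Sum>j\<in>agents coal i. \<Sum>im\<in>agents coal i. cw j im * \<psi> kk im m) = (\<Sum>im\<in>agents coal i. \<psi> kk im m)"
      proof -
        have "(\<Sum>j\<in>agents coal i. \<Sum>im\<in>agents coal i. cw j im * \<psi> kk im m)
            = (\<Sum>im\<in>agents coal i. (\<Sum>j\<in>agents coal i. cw j im) * \<psi> kk im m)"
          by (subst sum.swap) (simp add: sum_distrib_right)
        also have "\<dots> = (\<Sum>im\<in>agents coal i. \<psi> kk im m)"
        proof (rule sum.cong[OF refl])
          fix im assume "im \<in> agents coal i"
          then have "agents coal (coal im) = agents coal i" by (simp add: agents_def)
          then show "(\<Sum>j\<in>agents coal i. cw j im) * \<psi> kk im m = \<psi> kk im m" using c_sum[rule_format, of im] by simp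
        qed
        finally show ?thesis .
      qed
      finally show ?case using Suc.IH by simp
    qed
    have xupd: "xbar (Suc k) i = xbar k i - \<alpha> / (n i)^2 * (\<Sum>j\<in>agents coal i. u j * (\<Sum>m\<in>agents coal i. \<psi> k j m))" for i
    proof -
      have "(\<Sum>j\<in>agents coal i. u j * x (Suc k) $ j) = (\<Sum>j\<in>agents coal i.
           u j * (\<Sum>m\<in>agents coal i. r j m * x k $ m) - \<alpha> / n i * (u j * (\<Sum>m\<in>agents coal i. \<psi> k j m)))"
      proof (rule sum.cong[OF refl])
        fix j assume "j \<in> agents coal i"
        then have ag: "agents coal (coal j) = agents coal i" and cj: "coal j = i" by (simp_all add: agents_def)
        show "u j * x (Suc k) $ j = u j * (\<Sum>m\<in>agents coal i. r j m * x k $ m) - \<alpha> / n i * (u j * (\<Sum>m\<in>agents coal i. \<psi> k j m))"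
        proof -
          have h: "x (Suc k) $ j = (\<Sum>m\<in>agents coal i. r j m * x k $ m) - \<alpha> / n i * (\<Sum>m\<in>agents coal i. \<psi> k j m)"
            using upd_x[rule_format, of k j] ag cj by (simp add: n_def)
          show ?thesis unfolding h by (simp add: right_diff_distrib mult_ac)
        qed
      qed
      also have "\<dots> = (\<Sum>j\<in>agents coal i. u j * (\<Sum>m\<in>agents coal i. r j m * x k $ m))
          - \<alpha> / n i * (\<Sum>j\<in>agents coal i. u j * (\<Sum>m\<in>agents coal i. \<psi> k j m))"
        by (simp add: sum_subtractf sum_distrib_left)
      also have "(\<Sum>j\<in>agents coal i. u j * (\<Sum>m\<in>agents coal i. r j m * x k $ m)) = (\<Sum>m\<in>agents coal i. u m * x k $ m)"
      proof -
        have "(\<Sum>j\<in>agents coal i. u j * (\<Sum>m\<in>agents coal i. r j m * x k $ m))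
            = (\<Sum>m\<in>agents coal i. (\<Sum>j\<in>agents coal i. u j * r j m) * x k $ m)"
          by (simp add: sum_distrib_left sum_distrib_right mult_ac) (rule sum.swap)
        also have "\<dots> = (\<Sum>m\<in>agents coal i. u m * x k $ m)"
        proof (rule sum.cong[OF refl])
          fix m assume "m \<in> agents coal i"
          then have "agents coal (coal m) = agents coal i" by (simp add: agents_def)
          then show "(\<Sum>j\<in>agents coal i. u j * r j m) * x k $ m = u m * x k $ m" using u_left[rule_format, of m] by simp
        qed
        finally show ?thesis .
      qed
      finally have "(\<Sum>j\<in>agents coal i. u j * x (Suc k) $ j) = (\<Sum>m\<in>agents coal i. u m * x k $ m)
          - \<alpha> / n i * (\<Sum>j\<in>agents coal i. u j * (\<Sum>m\<in>agents coal i. \<psi> k j m))" .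
      then show ?thesis using npos[of i] unfolding xbar_def
        by (simp add: field_simps power2_eq_square)
    qed
    define e where "e = (\<lambda>i. xbar k i - ys $ i)"
    define xb where "xb = (\<chi> i. xbar k i)"
    have Xb: "Xbar k = bcast coal xb" by (simp add: Xbar_def bcast_def xb_def vec_eq_iff)
    define Qx where "Qx = (\<lambda>i. \<Sum>j\<in>agents coal i. \<Sum>m\<in>agents coal i. pd (f j) m (Xbar k))"
    define G where "G = (\<lambda>i. \<Sum>j\<in>agents coal i. \<Sum>m\<in>agents coal i. pd (f j) m (\<xi> k j))"
    define Ep where "Ep = (\<lambda>i j. \<Sum>m\<in>agents coal i. \<psi> k j m - w j * psibar k i m)"
    define P where "P = (\<lambda>i. \<Sum>j\<in>agents coal i. u j * Ep i j)"
    define Psi where "Psi = (\<lambda>i. \<Sum>j\<in>agents coal i. \<Sum>m\<in>agents coal i. (\<psi> k j m - w j * psibar k i m)\<^sup>2)"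
    define Xi where "Xi = (\<lambda>i. \<Sum>j\<in>agents coal i. (norm (\<xi> k j - Xbar k))\<^sup>2)"
    have GT: "G i = n i * (\<Sum>m\<in>agents coal i. psibar k i m)" for i
    proof -
      have "G i = (\<Sum>m\<in>agents coal i. \<Sum>j\<in>agents coal i. pd (f j) m (\<xi> k j))"
        unfolding G_def by (rule sum.swap)
      also have "\<dots> = (\<Sum>m\<in>agents coal i. \<Sum>j\<in>agents coal i. \<psi> k j m)"
        using psisum by simp
      also have "\<dots> = n i * (\<Sum>m\<in>agents coal i. psibar k i m)"
        unfolding psibar_def sum_distrib_left using npos[of i] by simp
      finally show ?thesis .
    qed
    have uPsi: "(\<Sum>j\<in>agents coal i. u j * (\<Sum>m\<in>agents coal i. \<psi> k j m)) = P i + uw i * G i / n i" for i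
    proof -
      have "(\<Sum>j\<in>agents coal i. u j * (\<Sum>m\<in>agents coal i. \<psi> k j m))
         = (\<Sum>j\<in>agents coal i. u j * Ep i j + u j * w j * (\<Sum>m\<in>agents coal i. psibar k i m))"
        by (rule sum.cong[OF refl]) (simp add: Ep_def sum_subtractf sum_distrib_left algebra_simps)
      also have "\<dots> = P i + uw i * (\<Sum>m\<in>agents coal i. psibar k i m)"
        by (simp add: P_def uw_def sum.distrib sum_distrib_right)
      finally show ?thesis using GT[of i] npos[of i] by simp
    qed
    have eupd: "xbar (Suc k) i - ys $ i = e i - \<alpha> / (n i)^2 * (P i + uw i * G i / n i)" for i
      using xupd[of i] uPsi[of i] by (simp add: e_def)
    have Vdiff: "Vx (Suc k) - Vx k = (\<Sum>i\<in>UNIV. (n i)^3 / (\<alpha> * uw i) * (e i - \<alpha> / (n i)^2 * (P i + uw i * G i / n i))^2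
        - (n i)^3 / (\<alpha> * uw i) * (e i)^2)"
      by (simp add: Vx_def sum_subtractf eupd e_def)
    have gradpd: "\<And>g m p. grad g p $ m = pd g m p" by (simp add: grad_def)
    have Psi_nn: "\<And>i. Psi i \<ge> 0" unfolding Psi_def by (intro sum_nonneg) auto
    have Xi_nn: "\<And>i. Xi i \<ge> 0" unfolding Xi_def by (intro sum_nonneg) auto
    have Exbar_nn: "Exbar k \<ge> 0" unfolding Exbar_def by (intro sum_nonneg) auto
    have BD: "(G i - Qx i)^2 \<le> n i * L2 i * Xi i" for i
    proof -
      have "G i - Qx i = (\<Sum>j\<in>agents coal i. \<Sum>m\<in>agents coal i. grad (f j) (\<xi> k j) $ m - grad (f j) (Xbar k) $ m)"
        by (simp add: G_def Qx_def gradpd sum_subtractf)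
      then have "(G i - Qx i)^2 = (\<Sum>j\<in>agents coal i. \<Sum>m\<in>agents coal i. grad (f j) (\<xi> k j) $ m - grad (f j) (Xbar k) $ m)^2"
        by simp
      also have "\<dots> \<le> L2 i * (\<Sum>j\<in>agents coal i. (sqrt (real (card (agents coal i))) * norm (\<xi> k j - Xbar k))^2)"
        unfolding L2_def
      proof (rule sum_sq_bound[OF finS], intro ballI)
        fix j show "\<bar>\<Sum>m\<in>agents coal i. grad (f j) (\<xi> k j) $ m - grad (f j) (Xbar k) $ m\<bar>
           \<le> lc j * (sqrt (real (card (agents coal i))) * norm (\<xi> k j - Xbar k))"
          by (rule partial_sum_grad) (use A2_lip in blast)
      qed
      also have "\<dots> = n i * L2 i * Xi i"
        by (simp add: Xi_def ncard power_mult_distrib sum_distrib_left mult_ac)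
      finally show ?thesis .
    qed
    have Qy0: "\<And>i. (\<Sum>j\<in>agents coal i. \<Sum>m\<in>agents coal i. pd (f j) m (bcast coal ys)) = 0"
      using Qmap_NE_zero[OF diff NE] Qmap_formula[OF diff] by metis
    have BQ: "(Qx i)^2 \<le> (n i)^2 * L2 i * M * Exbar k" for i
    proof -
      have "Qx i = (\<Sum>j\<in>agents coal i. \<Sum>m\<in>agents coal i. grad (f j) (bcast coal xb) $ m - grad (f j) (bcast coal ys) $ m)"
        using Qy0[of i] by (simp add: Qx_def Xb gradpd sum_subtractf)
      then have "(Qx i)^2 = (\<Sum>j\<in>agents coal i. \<Sum>m\<in>agents coal i. grad (f j) (bcast coal xb) $ m - grad (f j) (bcast coal ys) $ m)^2"
        by simp
      also have "\<dots> \<le> L2 i * (\<Sum>j\<in>agents coal i. (sqrt (real (card (agents coal i))) * norm (bcast coal xb - bcast coal ys))^2)"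
        unfolding L2_def
      proof (rule sum_sq_bound[OF finS], intro ballI)
        fix j show "\<bar>\<Sum>m\<in>agents coal i. grad (f j) (bcast coal xb) $ m - grad (f j) (bcast coal ys) $ m\<bar>
           \<le> lc j * (sqrt (real (card (agents coal i))) * norm (bcast coal xb - bcast coal ys))"
          by (rule partial_sum_grad) (use A2_lip in blast)
      qed
      also have "\<dots> = L2 i * ((n i)^2 * (norm (bcast coal xb - bcast coal ys))^2)"
        by (simp add: ncard power_mult_distrib power2_eq_square)
      also have "\<dots> \<le> L2 i * ((n i)^2 * (M * Exbar k))"
      proof -
        have "(norm (bcast coal xb - bcast coal ys))^2 \<le> M * Exbar k"
          using bcast_norm[of coal xb ys] by (simp add: M_def n_def Exbar_def xb_def)
        then show ?thesis using L2_nn[of i] by (simp add: mult_left_mono)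
      qed
      finally show ?thesis by (simp add: mult_ac)
    qed
    have BE: "(\<Sum>j\<in>agents coal i. (Ep i j)^2) \<le> n i * Psi i" for i
    proof -
      have "(\<Sum>j\<in>agents coal i. (Ep i j)^2) \<le> (\<Sum>j\<in>agents coal i. (\<Sum>m\<in>agents coal i. (\<psi> k j m - w j * psibar k i m)\<^sup>2) * card (agents coal i))"
        unfolding Ep_def by (rule sum_mono) (rule sum_squared_le_sum_of_squares)
      also have "\<dots> = n i * Psi i" by (simp add: Psi_def ncard sum_distrib_left sum_distrib_right mult_ac)
      finally show ?thesis .
    qed
    have BP: "(P i)^2 \<le> unorm2 i * (n i * Psi i)" for i
    proof -
      have "(P i)^2 \<le> unorm2 i * (\<Sum>j\<in>agents coal i. (Ep i j)^2)"
        unfolding P_def unorm2_def by (rule Cauchy_Schwarz_ineq_sum)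
      also have "\<dots> \<le> unorm2 i * (n i * Psi i)" using BE[of i] un_nn[of i] by (rule mult_left_mono)
      finally show ?thesis .
    qed
    have Bd: "(uw i * G i + n i * P i)^2 \<le> unorm2 i * ((n i)^2 * (n i + (1 / n i + M) * wnorm2 i * L2 i) * (Psi i + Xi i + Exbar k))" for i
    proof -
      have "uw i * G i + n i * P i = (\<Sum>j\<in>agents coal i. u j * (w j * (Qx i + (G i - Qx i)) + n i * Ep i j))"
        by (simp add: uw_def P_def algebra_simps sum.distrib sum_distrib_left sum_distrib_right)
      then have "(uw i * G i + n i * P i)^2 = (\<Sum>j\<in>agents coal i. u j * (w j * (Qx i + (G i - Qx i)) + n i * Ep i j))^2"
        by simp
      also have "\<dots> \<le> unorm2 i * (\<Sum>j\<in>agents coal i. (w j * (Qx i + (G i - Qx i)) + n i * Ep i j)^2)"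
        unfolding unorm2_def by (rule Cauchy_Schwarz_ineq_sum)
      also have "\<dots> \<le> unorm2 i * ((n i)^2 * (n i + (1 / n i + M) * wnorm2 i * L2 i) * (Psi i + Xi i + Exbar k))"
      proof (rule mult_left_mono[OF _ un_nn])
        show "(\<Sum>j\<in>agents coal i. (w j * (Qx i + (G i - Qx i)) + n i * Ep i j)^2)
          \<le> (n i)^2 * (n i + (1 / n i + M) * wnorm2 i * L2 i) * (Psi i + Xi i + Exbar k)"
          unfolding wnorm2_def
          by (rule z_bound[OF finS _ npos Mpos L2_nn BQ BD BE Psi_nn Xi_nn Exbar_nn])
             (use wn_pos in \<open>simp add: wnorm2_def\<close>)
      qed
      finally show ?thesis .
    qed
    have stepi: "(n i)^3 / (\<alpha> * uw i) * (e i - \<alpha> / (n i)^2 * (P i + uw i * G i / n i))^2 - (n i)^3 / (\<alpha> * uw i) * (e i)^2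
        \<le> -2 * e i * Qx i + l * (e i)^2 + beta_xxi * Xi i + beta_xpsi * Psi i + \<alpha> * Max (range b1) * (Psi i + Xi i + Exbar k)" for i
    proof -
      have s: "(n i)^3 / (\<alpha> * uw i) * (e i - \<alpha> / (n i)^2 * (P i + uw i * G i / n i))^2 - (n i)^3 / (\<alpha> * uw i) * (e i)^2
        \<le> -2*e i*Qx i + l*(e i)^2 + 2/l*(G i-Qx i)^2 + 2/l*((n i/uw i)^2*(P i)^2) + \<alpha>/((n i)^3*uw i)*(uw i*G i + n i*P i)^2"
        by (rule step_ineq[OF npos uwpos alpha_pos l_pos])
      have t3: "2/l*(G i - Qx i)^2 \<le> beta_xxi * Xi i"
      proof -
        have "2/l*(G i - Qx i)^2 \<le> 2/l*(n i * L2 i * Xi i)" by (rule mult_left_mono) (use BD[of i] l_pos in simp_all)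
        also have "\<dots> \<le> 2/l * (Max (range (\<lambda>i. n i * L2 i)) * Xi i)"
          by (intro mult_left_mono mult_right_mono) (use Max_ge'[of "\<lambda>i. n i * L2 i" i] Xi_nn[of i] l_pos in simp_all)
        finally show ?thesis by (simp add: beta_xxi_def mult_ac)
      qed
      have t4: "2/l*((n i/uw i)^2*(P i)^2) \<le> beta_xpsi * Psi i"
      proof -
        have "(n i/uw i)^2*(P i)^2 \<le> (n i/uw i)^2*(unorm2 i * (n i * Psi i))"
          using BP[of i] by (simp add: mult_left_mono)
        also have "\<dots> = (n i ^ 3 * unorm2 i / (uw i)\<^sup>2) * Psi i"
          by (simp add: power2_eq_square power3_eq_cube field_simps)
        also have "\<dots> \<le> Max (range (\<lambda>i. n i ^ 3 * unorm2 i / (uw i)\<^sup>2)) * Psi i"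
          by (rule mult_right_mono) (use Max_ge'[of "\<lambda>i. n i ^ 3 * unorm2 i / (uw i)\<^sup>2" i] Psi_nn[of i] in simp_all)
        finally have "(n i/uw i)^2*(P i)^2 \<le> Max (range (\<lambda>i. n i ^ 3 * unorm2 i / (uw i)\<^sup>2)) * Psi i" .
        then have "2/l*((n i/uw i)^2*(P i)^2) \<le> 2/l*(Max (range (\<lambda>i. n i ^ 3 * unorm2 i / (uw i)\<^sup>2)) * Psi i)"
          by (rule mult_left_mono) (use l_pos in simp)
        then show ?thesis by (simp add: beta_xpsi_def mult_ac)
      qed
      have t5: "\<alpha>/((n i)^3*uw i)*(uw i*G i + n i*P i)^2 \<le> \<alpha> * Max (range b1) * (Psi i + Xi i + Exbar k)"
      proof -
        have c0: "\<alpha>/((n i)^3*uw i) \<ge> 0" using alpha_pos npos[of i] uwpos[of i] by simp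
        have "\<alpha>/((n i)^3*uw i)*(uw i*G i + n i*P i)^2
            \<le> \<alpha>/((n i)^3*uw i) * (unorm2 i * ((n i)^2 * (n i + (1 / n i + M) * wnorm2 i * L2 i) * (Psi i + Xi i + Exbar k)))"
          using Bd[of i] c0 by (rule mult_left_mono)
        also have "\<dots> = \<alpha> * b1 i * (Psi i + Xi i + Exbar k)"
          using npos[of i] uwpos[of i] by (simp add: b1_def b0_def M_def power2_eq_square power3_eq_cube field_simps)
        also have "\<dots> \<le> \<alpha> * Max (range b1) * (Psi i + Xi i + Exbar k)"
          using Max_ge'[of b1 i] Psi_nn[of i] Xi_nn[of i] Exbar_nn alpha_pos
          by (intro mult_right_mono mult_left_mono) simp_all
        finally show ?thesis .
      qed
      show ?thesis using s t3 t4 t5 by linarith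
    qed
    have xbi: "\<And>i. xb $ i = xbar k i" by (simp add: xb_def)
    have A3': "l * Exbar k \<le> (\<Sum>i\<in>UNIV. e i * Qx i)"
    proof -
      have "l * (norm (xb - ys))^2 \<le> (xb - ys) \<bullet> (Qmap coal f xb - Qmap coal f ys)" using A3 by blast
      moreover have "(norm (xb - ys))^2 = Exbar k" by (simp add: norm_sq_vec Exbar_def xbi)
      moreover have "(xb - ys) \<bullet> (Qmap coal f xb - Qmap coal f ys) = (\<Sum>i\<in>UNIV. e i * Qx i)"
        by (simp add: inner_vec_def e_def xbi Qmap_formula[OF diff] Qy0 Qx_def Xb)
      ultimately show ?thesis by simp
    qed
    have sumXi: "(\<Sum>i\<in>UNIV. Xi i) = Exi k"
    proof -
      have "Exi k = (\<Sum>c\<in>UNIV. \<Sum>v\<in>{x\<in>UNIV. coal x = c}. (norm (\<xi> k v - Xbar k))\<^sup>2)"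
        unfolding Exi_def by (rule sum.group[symmetric]) auto
      then show ?thesis by (simp add: Xi_def agents_def)
    qed
    have sumPsi: "(\<Sum>i\<in>UNIV. Psi i) = Epsi k" by (simp add: Psi_def Epsi_def)
    have sume: "(\<Sum>i\<in>UNIV. (e i)^2) = Exbar k" by (simp add: e_def Exbar_def)
    have "Vx (Suc k) - Vx k \<le> (\<Sum>i\<in>UNIV. -2 * e i * Qx i + l * (e i)^2 + beta_xxi * Xi i + beta_xpsi * Psi i + \<alpha> * Max (range b1) * (Psi i + Xi i + Exbar k))"
      unfolding Vdiff by (rule sum_mono) (rule stepi)
    also have "\<dots> = -2 * (\<Sum>i\<in>UNIV. e i * Qx i) + l * (\<Sum>i\<in>UNIV. (e i)^2) + beta_xxi * (\<Sum>i\<in>UNIV. Xi i)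
        + beta_xpsi * (\<Sum>i\<in>UNIV. Psi i) + \<alpha> * Max (range b1) * ((\<Sum>i\<in>UNIV. Psi i) + (\<Sum>i\<in>UNIV. Xi i) + real CARD('c) * Exbar k)"
    proof -
      have h1: "(\<Sum>i\<in>UNIV. -2 * e i * Qx i) = -2 * (\<Sum>i\<in>UNIV. e i * Qx i)"
        by (simp add: sum_distrib_left mult.assoc)
      have h2: "(\<Sum>i\<in>UNIV. l * (e i)^2) = l * (\<Sum>i\<in>UNIV. (e i)^2)" by (simp add: sum_distrib_left)
      have h3: "(\<Sum>i\<in>UNIV. beta_xxi * Xi i) = beta_xxi * (\<Sum>i\<in>UNIV. Xi i)" by (simp add: sum_distrib_left)
      have h4: "(\<Sum>i\<in>UNIV. beta_xpsi * Psi i) = beta_xpsi * (\<Sum>i\<in>UNIV. Psi i)" by (simp add: sum_distrib_left)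
      have h5: "(\<Sum>i\<in>UNIV. \<alpha> * Max (range b1) * (Psi i + Xi i + Exbar k))
          = \<alpha> * Max (range b1) * ((\<Sum>i\<in>UNIV. Psi i) + (\<Sum>i\<in>UNIV. Xi i) + real CARD('c) * Exbar k)"
        by (simp add: sum_distrib_left[symmetric] sum.distrib)
      show ?thesis by (simp only: sum.distrib h1 h2 h3 h4 h5)
    qed
    also have "\<dots> = -2 * (\<Sum>i\<in>UNIV. e i * Qx i) + l * Exbar k + beta_xxi * Exi k
        + beta_xpsi * Epsi k + \<alpha> * Max (range b1) * (Epsi k + Exi k + real CARD('c) * Exbar k)"
      by (simp add: sumXi sumPsi sume)
    finally show ?thesis using A3' by linarith
  qed
  show ?thesis unfolding Let_def
    using main unfolding n_def unorm2_def wnorm2_def uw_def L2_def beta_xpsi_def beta_xxi_def b0_def b1_def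
      xbar_def Xbar_def psibar_def Epsi_def Exbar_def Exi_def Vx_def .
qed

end
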